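(* Let $I\in\mathbb{I}_{m,n}$ be written in staircase form $I=\bigsqcup_{i=s}^t[b_i,d_i]_i$. Let $C$ be the set of full subquivers of $G_{m,n}$ with vertex set $I_0\cup\{v\}$, where $v$ is a vertex of $G_{m,n}$ (i.e. lies within the grid) of one of the following forms: (1) $v=(j,b_j-1)$ for some $j\in\{s,\dots,t\}$; (2) $v=(j,d_j+1)$ for some $j\in\{s,\dots,t\}$; (3) $v=(t+1,b_t)$; (4) $v=(s-1,d_s)$. Then $\mathrm{Cov}(I)=C\cap\mathbb{I}_{m,n}$.
   Context: For integers $m,n\ge1$, $G_{m,n}$ is the equioriented commutative $m\times n$ grid: the quiver with vertex set $\{(i,j):1\le i\le m,\ 1\le j\le n\}$ and arrows $(i,j)\to(i,j+1)$ and $(i,j)\to(i+1,j)$, bound by all commutativity relations. An interval of $G_{m,n}$ is a nonempty full subquiver $I$ which is connected (as an undirected graph) and convex (whenever $x,y\in I_0$ and there are paths $x\to z$ and $z\to y$ in $G_{m,n}$, then $z\in I_0$); $I_0$ denotes its vertex set. $\mathbb{I}_{m,n}$ is the set of intervals, partially ordered by $I\le J\iff I_0\subseteq J_0$; $\mathrm{Cov}(I)$ is the set of $J\in\mathbb{I}_{m,n}$ covering $I$. Staircase form: every $I\in\mathbb{I}_{m,n}$ can be written as $\bigsqcup_{i=s}^t[b_i,d_i]_i$ with $1\le s\le t\le m$, $1\le b_i\le d_i\le n$ and $b_{i+1}\le b_i\le d_{i+1}\le d_i$ for $s\le i<t$, meaning $I_0=\{(i,x): s\le i\le t,\ b_i\le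 x\le d_i\}$. *)

theory Defs
  imports Main
begin

text \<open>Vertices of the grid quiver G_{m,n} are pairs (i,j) with 1 \<le> i \<le> m, 1 \<le> j \<le> n.
A full subquiver is determined by its vertex set, so intervals are represented by vertex sets.\<close>

definition grid :: "nat \<Rightarrow> nat \<Rightarrow> (nat \<times> nat) set" where
  "grid m n = {1..m} \<times> {1..n}"

definition grid_arrow :: "nat \<Rightarrow> nat \<Rightarrow> nat \<times> nat \<Rightarrow> nat \<times> nat \<Rightarrow> bool" where
  "grid_arrow m n x y \<longleftrightarrow> x \<in> grid m n \<and> y \<in> grid m n \<and>
     ((fst y = fst x \<and> snd y = snd x + 1) \<or> (fst y = fst x + 1 \<and> snd y = snd x))"

definition grid_path :: "nat \<Rightarrow> nat \<Rightarrow> nat \<times> nat \<Rightarrow> nat \<times> nat \<Rightarrow> bool" where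
  "grid_path m n x y \<longleftrightarrow> x \<in> grid m n \<and> (grid_arrow m n)\<^sup>*\<^sup>* x y"

definition sub_connected :: "nat \<Rightarrow> nat \<Rightarrow> (nat \<times> nat) set \<Rightarrow> bool" where
  "sub_connected m n S \<longleftrightarrow>
     (\<forall>x\<in>S. \<forall>y\<in>S. (\<lambda>u v. u \<in> S \<and> v \<in> S \<and> (grid_arrow m n u v \<or> grid_arrow m n v u))\<^sup>*\<^sup>* x y)"

definition sub_convex :: "nat \<Rightarrow> nat \<Rightarrow> (nat \<times> nat) set \<Rightarrow> bool" where
  "sub_convex m n S \<longleftrightarrow>
     (\<forall>x\<in>S. \<forall>y\<in>S. \<forall>z. grid_path m n x z \<and> grid_path m n z y \<longrightarrow> z \<in> S)"

definition is_interval :: "nat \<Rightarrow> nat \<Rightarrow> (nat \<times> nat) set \<Rightarrow> bool" where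
  "is_interval m n S \<longleftrightarrow> S \<noteq> {} \<and> S \<subseteq> grid m n \<and> sub_connected m n S \<and> sub_convex m n S"

definition intervals :: "nat \<Rightarrow> nat \<Rightarrow> (nat \<times> nat) set set" where
  "intervals m n = {S. is_interval m n S}"

definition Cov :: "nat \<Rightarrow> nat \<Rightarrow> (nat \<times> nat) set \<Rightarrow> (nat \<times> nat) set set" where
  "Cov m n I = {J \<in> intervals m n. I \<subset> J \<and> \<not> (\<exists>K \<in> intervals m n. I \<subset> K \<and> K \<subset> J)}"

definition staircase :: "nat \<Rightarrow> nat \<Rightarrow> nat \<Rightarrow> nat \<Rightarrow> (nat \<Rightarrow> nat) \<Rightarrow> (nat \<Rightarrow> nat) \<Rightarrow> (nat \<times> nat) set \<Rightarrow> bool" where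
  "staircase m n s t b d I \<longleftrightarrow>
     1 \<le> s \<and> s \<le> t \<and> t \<le> m \<and>
     (\<forall>i. s \<le> i \<and> i \<le> t \<longrightarrow> 1 \<le> b i \<and> b i \<le> d i \<and> d i \<le> n) \<and>
     (\<forall>i. s \<le> i \<and> i < t \<longrightarrow> b (i+1) \<le> b i \<and> b i \<le> d (i+1) \<and> d (i+1) \<le> d i) \<and>
     I = {(i, x). s \<le> i \<and> i \<le> t \<and> b i \<le> x \<and> x \<le> d i}"

end

theory Submission imports Defs begin

lemma arrow_le: "grid_arrow m n x y \<Longrightarrow> fst x \<le> fst y \<and> snd x \<le> snd y \<and> y \<in> grid m n"
  unfolding grid_arrow_def by auto

lemma path_le: "(grid_arrow m n)\<^sup>*\<^sup>* x y \<Longrightarrow> x \<in> grid m n \<Longrightarrow>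
   y \<in> grid m n \<and> fst x \<le> fst y \<and> snd x \<le> snd y"
proof (induction rule: rtranclp_induct)
  case base then show ?case by simp
next
  case (step y z) then show ?case using arrow_le[of m n y z] by auto
qed

lemma path_rows: "(a,c) \<in> grid m n \<Longrightarrow> a + k \<le> m \<Longrightarrow> (grid_arrow m n)\<^sup>*\<^sup>* (a,c) (a+k,c)"
proof (induction k)
  case 0 then show ?case by simp
next
  case (Suc k)
  have "grid_arrow m n (a+k,c) (a+Suc k,c)" using Suc.prems unfolding grid_arrow_def grid_def by auto
  moreover have "(grid_arrow m n)\<^sup>*\<^sup>* (a,c) (a+k,c)" using Suc by simp
  ultimately show ?case by (meson rtranclp.rtrancl_into_rtrancl)
qed

lemma path_cols: "(a,c) \<in> grid m n \<Longrightarrow> c + k \<le> n \<Longrightarrow> (grid_arrow m n)\<^sup>*\<^sup>* (a,c) (a,c+k)"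
proof (induction k)
  case 0 then show ?case by simp
next
  case (Suc k)
  have "grid_arrow m n (a,c+k) (a,c+Suc k)" using Suc.prems unfolding grid_arrow_def grid_def by auto
  moreover have "(grid_arrow m n)\<^sup>*\<^sup>* (a,c) (a,c+k)" using Suc by simp
  ultimately show ?case by (meson rtranclp.rtrancl_into_rtrancl)
qed

lemma grid_path_iff: "grid_path m n x y \<longleftrightarrow> x \<in> grid m n \<and> y \<in> grid m n \<and> fst x \<le> fst y \<and> snd x \<le> snd y"
proof
  assume "grid_path m n x y" then show "x \<in> grid m n \<and> y \<in> grid m n \<and> fst x \<le> fst y \<and> snd x \<le> snd y"
    unfolding grid_path_def using path_le by blast
next
  assume h: "x \<in> grid m n \<and> y \<in> grid m n \<and> fst x \<le> fst y \<and> snd x \<le> snd y"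
  obtain a c a' c' where xy: "x = (a,c)" "y = (a',c')" by (cases x, cases y) auto
  have g: "(a',c) \<in> grid m n" using h xy unfolding grid_def by auto
  have 1: "(grid_arrow m n)\<^sup>*\<^sup>* (a,c) (a+(a'-a),c)" using path_rows[of a c m n "a'-a"] h xy unfolding grid_def by auto
  have 2: "(grid_arrow m n)\<^sup>*\<^sup>* (a',c) (a',c+(c'-c))" using path_cols[OF g, of "c'-c"] h xy unfolding grid_def by auto
  show "grid_path m n x y" unfolding grid_path_def using 1 2 h xy by auto
qed

lemma convJ: "is_interval m n J \<Longrightarrow> p \<in> J \<Longrightarrow> q \<in> J \<Longrightarrow> fst p \<le> fst z \<Longrightarrow> snd p \<le> snd z \<Longrightarrow>
   fst z \<le> fst q \<Longrightarrow> snd z \<le> snd q \<Longrightarrow> z \<in> J"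
proof -
  assume a: "is_interval m n J" "p \<in> J" "q \<in> J" "fst p \<le> fst z" "snd p \<le> snd z" "fst z \<le> fst q" "snd z \<le> snd q"
  have "p \<in> grid m n" "q \<in> grid m n" using a unfolding is_interval_def by auto
  then have "z \<in> grid m n" using a unfolding grid_def by (auto simp: mem_Times_iff)
  then have "grid_path m n p z" "grid_path m n z q" using a \<open>p \<in> grid m n\<close> \<open>q \<in> grid m n\<close>
    by (auto simp: grid_path_iff)
  then show "z \<in> J" using a unfolding is_interval_def sub_convex_def by blast
qed

lemma exit_edge:
  assumes "R\<^sup>*\<^sup>* x y" "x \<in> A" "y \<notin> A"
  shows "\<exists>u w. R u w \<and> u \<in> A \<and> w \<notin> A"
  using assms by (induction rule: rtranclp_induct) auto


locale stair =
  fixes m n s t :: nat and b d :: "nat \<Rightarrow> nat" and I :: "(nat \<times> nat) set"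
  assumes st: "staircase m n s t b d I" and iv: "is_interval m n I"
begin

lemma memI: "(i,x) \<in> I \<longleftrightarrow> s \<le> i \<and> i \<le> t \<and> b i \<le> x \<and> x \<le> d i"
  using st unfolding staircase_def by auto

lemma sst: "1 \<le> s" "s \<le> t" "t \<le> m" using st unfolding staircase_def by auto

lemma bd: "s \<le> i \<Longrightarrow> i \<le> t \<Longrightarrow> 1 \<le> b i \<and> b i \<le> d i \<and> d i \<le> n"
  using st unfolding staircase_def by auto

lemma step1: "s \<le> i \<Longrightarrow> i < t \<Longrightarrow> b (Suc i) \<le> b i \<and> d (Suc i) \<le> d i"
  using st unfolding staircase_def by auto

lemma bmono: assumes "s \<le> i" "i \<le> r" "r \<le> t" shows "b r \<le> b i \<and> d r \<le> d i"
proof -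
  have "r \<le> t \<longrightarrow> b r \<le> b i \<and> d r \<le> d i" using assms(2)
  proof (induction r rule: dec_induct)
    case base then show ?case by simp
  next
    case (step k) then show ?case using step1[of k] assms(1) by fastforce
  qed
  then show ?thesis using assms by simp
qed

lemma Igrid: "I \<subseteq> grid m n" using iv unfolding is_interval_def by auto

lemma ext_interval:
  assumes vg: "v \<in> grid m n" and uI: "u \<in> I" and adj: "grid_arrow m n u v \<or> grid_arrow m n v u"
    and L: "\<And>p z. p \<in> I \<Longrightarrow> fst p \<le> fst z \<Longrightarrow> snd p \<le> snd z \<Longrightarrow> fst z \<le> fst v \<Longrightarrow> snd z \<le> snd v \<Longrightarrow> z \<in> I \<union> {v}"
    and U: "\<And>p z. p \<in> I \<Longrightarrow> fst v \<le> fst z \<Longrightarrow> snd v \<le> snd z \<Longrightarrow> fst z \<le> fst p \<Longrightarrow> snd z \<le> snd p \<Longrightarrow> z \<in> I \<union> {v}"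
  shows "is_interval m n (I \<union> {v})"
proof -
  let ?S = "I \<union> {v}"
  let ?R = "\<lambda>u v. u \<in> I \<and> v \<in> I \<and> (grid_arrow m n u v \<or> grid_arrow m n v u)"
  let ?R' = "\<lambda>u w. u \<in> ?S \<and> w \<in> ?S \<and> (grid_arrow m n u w \<or> grid_arrow m n w u)"
  have mono: "\<And>x y. ?R\<^sup>*\<^sup>* x y \<Longrightarrow> ?R'\<^sup>*\<^sup>* x y"
    by (rule mono_rtranclp[rule_format]) auto
  have Ic: "\<And>x y. x \<in> I \<Longrightarrow> y \<in> I \<Longrightarrow> ?R\<^sup>*\<^sup>* x y" using iv unfolding is_interval_def sub_connected_def by blast
  have e1: "?R' u v" "?R' v u" using uI adj by auto
  have conn: "sub_connected m n ?S"
    unfolding sub_connected_def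
  proof (intro ballI)
    fix x y assume x: "x \<in> ?S" and y: "y \<in> ?S"
    show "?R'\<^sup>*\<^sup>* x y"
    proof (cases "x \<in> I")
      case True
      show ?thesis
      proof (cases "y \<in> I")
        case True then show ?thesis using \<open>x \<in> I\<close> Ic mono by blast
      next
        case False then have "y = v" using y by auto
        have "?R'\<^sup>*\<^sup>* x u" using Ic mono \<open>x \<in> I\<close> uI by blast
        then have "?R'\<^sup>*\<^sup>* x v" using e1(1) by (rule rtranclp.rtrancl_into_rtrancl)
        then show ?thesis using \<open>y = v\<close> by simp
      qed
    next
      case False then have "x = v" using x by auto
      show ?thesis
      proof (cases "y \<in> I")
        case True
        have "?R'\<^sup>*\<^sup>* u y" using Ic mono True uI by blast
        then have "?R'\<^sup>*\<^sup>* v y" using e1(2) by (rule converse_rtranclp_into_rtranclp[rotated])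
        then show ?thesis using \<open>x = v\<close> by simp
      next
        case False then have "y = v" using y by auto
        then show ?thesis using \<open>x = v\<close> by simp
      qed
    qed
  qed
  have conv: "sub_convex m n ?S"
    unfolding sub_convex_def
  proof (intro ballI allI impI)
    fix x y z assume x: "x \<in> ?S" and y: "y \<in> ?S" and p: "grid_path m n x z \<and> grid_path m n z y"
    then have le: "fst x \<le> fst z" "snd x \<le> snd z" "fst z \<le> fst y" "snd z \<le> snd y"
      by (auto simp: grid_path_iff)
    show "z \<in> ?S"
    proof (cases "x \<in> I")
      case True
      show ?thesis
      proof (cases "y \<in> I")
        case True then have "z \<in> I" using \<open>x \<in> I\<close> p iv unfolding is_interval_def sub_convex_def by blast
        then show ?thesis by simp
      next
        case False then have "y = v" using y by auto
        then show ?thesis using L[OF \<open>x \<in> I\<close>] le by auto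
      qed
    next
      case False then have "x = v" using x by auto
      show ?thesis
      proof (cases "y \<in> I")
        case True
        then show ?thesis using U[OF True] le \<open>x = v\<close> by auto
      next
        case False then have "y = v" using y by auto
        then have "z = v" using le \<open>x = v\<close> by (simp add: prod_eq_iff)
        then show ?thesis by simp
      qed
    qed
  qed
  show ?thesis unfolding is_interval_def using conn conv Igrid vg by auto
qed

end
context stair begin

lemma uI_grid: "s \<le> j \<Longrightarrow> j \<le> t \<Longrightarrow> b j \<le> x \<Longrightarrow> x \<le> d j \<Longrightarrow> (j,x) \<in> grid m n"
  using memI Igrid by blast

lemma typeA:
  assumes j: "s \<le> j" "j \<le> t" and c: "j = s \<or> d j < d (j-1)" and vg: "(j, d j + 1) \<in> grid m n"
  shows "is_interval m n (I \<union> {(j, d j + 1)})"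
proof (rule ext_interval[OF vg, of "(j, d j)"])
  show "(j, d j) \<in> I" using memI bd j by auto
  then show "grid_arrow m n (j, d j) (j, d j + 1) \<or> grid_arrow m n (j, d j + 1) (j, d j)"
    using vg Igrid unfolding grid_arrow_def by auto
next
  fix p z assume p: "p \<in> I" and le: "fst p \<le> fst z" "snd p \<le> snd z" "fst z \<le> fst (j, d j + 1)" "snd z \<le> snd (j, d j + 1)"
  obtain i x r y where pz: "p = (i,x)" "z = (r,y)" by (cases p, cases z) auto
  have i: "s \<le> i" "i \<le> t" "b i \<le> x" "x \<le> d i" using p pz memI by auto
  have r: "i \<le> r" "r \<le> j" "x \<le> y" "y \<le> d j + 1" using le pz by auto
  have m1: "b r \<le> b i" using bmono[of i r] i r j by auto
  have m2: "d j \<le> d r" using bmono[of r j] i r j by auto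
  show "z \<in> I \<union> {(j, d j + 1)}"
  proof (cases "y \<le> d j")
    case True then show ?thesis using pz memI i r m1 m2 j by auto
  next
    case False
    show ?thesis
    proof (cases "r = j")
      case True then show ?thesis using False r pz by auto
    next
      case False
      then have "r \<le> j - 1" "j \<noteq> s" using r i by auto
      then have "d (j-1) \<le> d r" using bmono[of r "j-1"] i r j by auto
      then have "y \<le> d r" using c r \<open>j \<noteq> s\<close> by auto
      then show ?thesis using pz memI i r m1 j by auto
    qed
  qed
next
  fix p z assume p: "p \<in> I" and le: "fst (j, d j + 1) \<le> fst z" "snd (j, d j + 1) \<le> snd z" "fst z \<le> fst p" "snd z \<le> snd p"
  obtain i x where pz: "p = (i,x)" by (cases p) auto
  have i: "s \<le> i" "i \<le> t" "b i \<le> x" "x \<le> d i" using p pz memI by auto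
  have "d i \<le> d j" using bmono[of j i] i le pz j by auto
  then show "z \<in> I \<union> {(j, d j + 1)}" using le pz i by auto
qed

lemma typeB:
  assumes j: "s \<le> j" "j \<le> t" and c: "j = t \<or> b (j+1) < b j" and vg: "(j, b j - 1) \<in> grid m n"
  shows "is_interval m n (I \<union> {(j, b j - 1)})"
proof -
  have b2: "b j \<ge> 2" using vg unfolding grid_def by auto
  show ?thesis
  proof (rule ext_interval[OF vg, of "(j, b j)"])
    show "(j, b j) \<in> I" using memI bd j by auto
    then show "grid_arrow m n (j, b j) (j, b j - 1) \<or> grid_arrow m n (j, b j - 1) (j, b j)"
      using vg Igrid b2 unfolding grid_arrow_def by auto
  next
    fix p z assume p: "p \<in> I" and le: "fst p \<le> fst z" "snd p \<le> snd z" "fst z \<le> fst (j, b j - 1)" "snd z \<le> snd (j, b j - 1)"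
    obtain i x where pz: "p = (i,x)" by (cases p) auto
    have i: "s \<le> i" "i \<le> t" "b i \<le> x" "x \<le> d i" using p pz memI by auto
    have "b j \<le> b i" using bmono[of i j] i le pz j by auto
    then show "z \<in> I \<union> {(j, b j - 1)}" using le pz i b2 by auto
  next
    fix p z assume p: "p \<in> I" and le: "fst (j, b j - 1) \<le> fst z" "snd (j, b j - 1) \<le> snd z" "fst z \<le> fst p" "snd z \<le> snd p"
    obtain i x r y where pz: "p = (i,x)" "z = (r,y)" by (cases p, cases z) auto
    have i: "s \<le> i" "i \<le> t" "b i \<le> x" "x \<le> d i" using p pz memI by auto
    have r: "j \<le> r" "r \<le> i" "b j - 1 \<le> y" "y \<le> x" using le pz by auto
    have m1: "b r \<le> b j" using bmono[of j r] i r j by auto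
    have m2: "d i \<le> d r" using bmono[of r i] i r j by auto
    show "z \<in> I \<union> {(j, b j - 1)}"
    proof (cases "b j \<le> y")
      case True then show ?thesis using pz memI i r m1 m2 j by auto
    next
      case False
      show ?thesis
      proof (cases "r = j")
        case True then show ?thesis using False r pz by auto
      next
        case False
        then have "j + 1 \<le> r" "j \<noteq> t" using r i by auto
        then have "b r \<le> b (j+1)" using bmono[of "j+1" r] i r j by auto
        then have "b r \<le> y" using c r \<open>j \<noteq> t\<close> by auto
        then show ?thesis using pz memI i r m2 j by auto
      qed
    qed
  qed
qed

lemma typeC:
  assumes vg: "(t+1, b t) \<in> grid m n"
  shows "is_interval m n (I \<union> {(t+1, b t)})"
proof (rule ext_interval[OF vg, of "(t, b t)"])
  show "(t, b t) \<in> I" using memI bd sst by auto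
  then show "grid_arrow m n (t, b t) (t+1, b t) \<or> grid_arrow m n (t+1, b t) (t, b t)"
    using vg Igrid unfolding grid_arrow_def by auto
next
  fix p z assume p: "p \<in> I" and le: "fst p \<le> fst z" "snd p \<le> snd z" "fst z \<le> fst (t+1, b t)" "snd z \<le> snd (t+1, b t)"
  obtain i x r y where pz: "p = (i,x)" "z = (r,y)" by (cases p, cases z) auto
  have i: "s \<le> i" "i \<le> t" "b i \<le> x" "x \<le> d i" using p pz memI by auto
  have r: "i \<le> r" "r \<le> t+1" "x \<le> y" "y \<le> b t" using le pz by auto
  have "b t \<le> b i" using bmono[of i t] i by auto
  then have eq: "x = b t" "y = b t" "b i = b t" using i r by auto
  show "z \<in> I \<union> {(t+1, b t)}"
  proof (cases "r = t+1")
    case True then show ?thesis using pz eq by auto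
  next
    case False
    then have "b t \<le> b r" "b r \<le> b i" using bmono[of r t] bmono[of i r] i r by auto
    then show ?thesis using pz memI eq i r False bd[of r] by auto
  qed
next
  fix p z assume p: "p \<in> I" and le: "fst (t+1, b t) \<le> fst z" "snd (t+1, b t) \<le> snd z" "fst z \<le> fst p" "snd z \<le> snd p"
  obtain i x where pz: "p = (i,x)" by (cases p) auto
  have "i \<le> t" using p pz memI by auto
  then show "z \<in> I \<union> {(t+1, b t)}" using le pz by auto
qed

lemma typeD:
  assumes vg: "(s-1, d s) \<in> grid m n"
  shows "is_interval m n (I \<union> {(s-1, d s)})"
proof -
  have s2: "s \<ge> 2" using vg unfolding grid_def by auto
  show ?thesis
  proof (rule ext_interval[OF vg, of "(s, d s)"])
    show "(s, d s) \<in> I" using memI bd sst by auto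
    then show "grid_arrow m n (s, d s) (s-1, d s) \<or> grid_arrow m n (s-1, d s) (s, d s)"
      using vg Igrid s2 unfolding grid_arrow_def by auto
  next
    fix p z assume p: "p \<in> I" and le: "fst p \<le> fst z" "snd p \<le> snd z" "fst z \<le> fst (s-1, d s)" "snd z \<le> snd (s-1, d s)"
    obtain i x where pz: "p = (i,x)" by (cases p) auto
    have "s \<le> i" using p pz memI by auto
    then show "z \<in> I \<union> {(s-1, d s)}" using le pz s2 by auto
  next
    fix p z assume p: "p \<in> I" and le: "fst (s-1, d s) \<le> fst z" "snd (s-1, d s) \<le> snd z" "fst z \<le> fst p" "snd z \<le> snd p"
    obtain i x r y where pz: "p = (i,x)" "z = (r,y)" by (cases p, cases z) auto
    have i: "s \<le> i" "i \<le> t" "b i \<le> x" "x \<le> d i" using p pz memI by auto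
    have r: "s - 1 \<le> r" "r \<le> i" "d s \<le> y" "y \<le> x" using le pz by auto
    have "d i \<le> d s" using bmono[of s i] i by auto
    then have eq: "x = d s" "y = d s" "d i = d s" using i r by auto
    show "z \<in> I \<union> {(s-1, d s)}"
    proof (cases "r = s - 1")
      case True then show ?thesis using pz eq by auto
    next
      case False
      then have "d i \<le> d r" "d r \<le> d s" using bmono[of r i] bmono[of s r] i r s2 by auto
      then show ?thesis using pz memI eq i r False bd[of r] s2 by auto
    qed
  qed
qed

end
context stair begin

lemma redA:
  assumes J: "is_interval m n J" "I \<subseteq> J"
  shows "s \<le> j \<Longrightarrow> j \<le> t \<Longrightarrow> (j, d j + 1) \<in> J \<Longrightarrow>
    \<exists>j'. s \<le> j' \<and> j' \<le> j \<and> (j', d j' + 1) \<in> J \<and> (j' = s \<or> d j' < d (j'-1))"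
proof (induction j rule: less_induct)
  case (less j)
  show ?case
  proof (cases "j = s \<or> d j < d (j-1)")
    case True then show ?thesis using less.prems by auto
  next
    case False
    then have js: "s < j" and eq: "d (j-1) = d j" using step1[of "j-1"] less.prems by auto
    have "(j-1, d (j-1)) \<in> I" using memI bd[of "j-1"] js less.prems by auto
    then have "(j-1, d (j-1) + 1) \<in> J"
      using convJ[OF J(1), of "(j-1, d (j-1))" "(j, d j + 1)" "(j-1, d (j-1) + 1)"] J(2) less.prems eq by auto
    then have "\<exists>j'. s \<le> j' \<and> j' \<le> j-1 \<and> (j', d j' + 1) \<in> J \<and> (j' = s \<or> d j' < d (j'-1))"
      using js less.prems by (intro less.IH) auto
    then obtain j' where "s \<le> j' \<and> j' \<le> j-1 \<and> (j', d j' + 1) \<in> J \<and> (j' = s \<or> d j' < d (j'-1))" by blast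
    then show ?thesis by (intro exI[of _ j']) auto
  qed
qed

lemma redB:
  assumes J: "is_interval m n J" "I \<subseteq> J"
  shows "s \<le> j \<Longrightarrow> j \<le> t \<Longrightarrow> (j, b j - 1) \<in> J \<Longrightarrow>
    \<exists>j'. j \<le> j' \<and> j' \<le> t \<and> (j', b j' - 1) \<in> J \<and> (j' = t \<or> b (j'+1) < b j')"
proof (induction "t - j" arbitrary: j rule: less_induct)
  case less
  show ?case
  proof (cases "j = t \<or> b (j+1) < b j")
    case True then show ?thesis using less.prems by auto
  next
    case False
    then have jt: "j < t" and eq: "b (j+1) = b j" using step1[of "j"] less.prems by auto
    have "(j+1, b (j+1)) \<in> I" using memI bd[of "j+1"] jt less.prems by auto
    then have "(j+1, b (j+1) - 1) \<in> J"
      using convJ[OF J(1), of "(j, b j - 1)" "(j+1, b (j+1))" "(j+1, b (j+1) - 1)"] J(2) less.prems eq by auto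
    then have "\<exists>j'. j+1 \<le> j' \<and> j' \<le> t \<and> (j', b j' - 1) \<in> J \<and> (j' = t \<or> b (j'+1) < b j')"
      using jt less.prems by (intro less.hyps) auto
    then obtain j' where "j+1 \<le> j' \<and> j' \<le> t \<and> (j', b j' - 1) \<in> J \<and> (j' = t \<or> b (j'+1) < b j')" by blast
    then show ?thesis by (intro exI[of _ j']) auto
  qed
qed

definition listed :: "nat \<times> nat \<Rightarrow> bool" where
  "listed v \<longleftrightarrow> ((\<exists>j. s \<le> j \<and> j \<le> t \<and> v = (j, b j - 1)) \<or>
           (\<exists>j. s \<le> j \<and> j \<le> t \<and> v = (j, d j + 1)) \<or>
           v = (t + 1, b t) \<or>
           v = (s - 1, d s))"

lemma good_A: "(j, d j + 1) \<in> J \<Longrightarrow> is_interval m n J \<Longrightarrow> I \<subseteq> J \<Longrightarrow> s \<le> j \<Longrightarrow> j \<le> t \<Longrightarrow>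
  \<exists>v\<in>J. v \<in> grid m n \<and> listed v \<and> is_interval m n (I \<union> {v})"
proof -
  assume a: "(j, d j + 1) \<in> J" "is_interval m n J" "I \<subseteq> J" "s \<le> j" "j \<le> t"
  obtain j' where j': "s \<le> j'" "j' \<le> j" "(j', d j' + 1) \<in> J" "j' = s \<or> d j' < d (j'-1)"
    using redA[OF a(2,3) a(4,5,1)] by auto
  have g: "(j', d j' + 1) \<in> grid m n" using j' a unfolding is_interval_def by auto
  show ?thesis using typeA[of j'] j' a g unfolding listed_def by (intro bexI[OF _ j'(3)]) auto
qed

lemma good_B: "(j, b j - 1) \<in> J \<Longrightarrow> is_interval m n J \<Longrightarrow> I \<subseteq> J \<Longrightarrow> s \<le> j \<Longrightarrow> j \<le> t \<Longrightarrow>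
  \<exists>v\<in>J. v \<in> grid m n \<and> listed v \<and> is_interval m n (I \<union> {v})"
proof -
  assume a: "(j, b j - 1) \<in> J" "is_interval m n J" "I \<subseteq> J" "s \<le> j" "j \<le> t"
  obtain j' where j': "j \<le> j'" "j' \<le> t" "(j', b j' - 1) \<in> J" "j' = t \<or> b (j'+1) < b j'"
    using redB[OF a(2,3) a(4,5,1)] by auto
  have g: "(j', b j' - 1) \<in> grid m n" using j' a unfolding is_interval_def by auto
  show ?thesis using typeB[of j'] j' a g unfolding listed_def by (intro bexI[OF _ j'(3)]) auto
qed

lemma exists_v:
  assumes J: "is_interval m n J" "I \<subset> J"
  shows "\<exists>v\<in>J. v \<in> grid m n \<and> listed v \<and> is_interval m n (I \<union> {v})"
proof -
  have IJ: "I \<subseteq> J" using J by auto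
  obtain y where y: "y \<in> J" "y \<notin> I" using J by auto
  obtain x where x: "x \<in> I" using iv unfolding is_interval_def by auto
  let ?R = "\<lambda>u v. u \<in> J \<and> v \<in> J \<and> (grid_arrow m n u v \<or> grid_arrow m n v u)"
  have "?R\<^sup>*\<^sup>* x y" using J(1) x y IJ unfolding is_interval_def sub_connected_def by blast
  then obtain u w where uw: "?R u w" "u \<in> I" "w \<notin> I" using exit_edge[of ?R x y I] x y by blast
  obtain i xx where u: "u = (i,xx)" by (cases u) auto
  have i: "s \<le> i" "i \<le> t" "b i \<le> xx" "xx \<le> d i" using uw u memI by auto
  have wJ: "w \<in> J" using uw by auto
  have Jg: "J \<subseteq> grid m n" using J unfolding is_interval_def by auto
  consider (r) "w = (i, xx+1)" | (dn) "w = (i+1, xx)" | (l) "w = (i, xx - 1)" "xx \<ge> 1" | (up) "w = (i - 1, xx)" "i \<ge> 1"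
    using uw u unfolding grid_arrow_def by (cases w) auto
  then show ?thesis
  proof cases
    case r
    then have "xx = d i" using uw i memI by auto
    then show ?thesis using good_A[of i J] r wJ J IJ i by auto
  next
    case dn
    show ?thesis
    proof (cases "i = t")
      case True
      have "(t, b t) \<in> I" using memI bd sst by auto
      then have "(t+1, b t) \<in> J" using convJ[OF J(1), of "(t, b t)" w "(t+1, b t)"] IJ wJ dn True i by auto
      moreover have "(t+1, b t) \<in> grid m n" using calculation Jg by auto
      ultimately show ?thesis using typeC unfolding listed_def by blast
    next
      case False
      then have it: "i < t" using i by auto
      have "b (i+1) \<le> b i" using step1 it i by auto
      then have gt: "d (i+1) < xx" using uw dn memI i it by auto
      have "(i+1, d (i+1)) \<in> I" using memI bd[of "i+1"] it i by auto
      then have "(i+1, d (i+1) + 1) \<in> J" using convJ[OF J(1), of "(i+1, d (i+1))" w] IJ wJ dn gt by auto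
      then show ?thesis using good_A[of "i+1" J] J IJ i it by auto
    qed
  next
    case l
    then have "xx = b i" using uw i memI by auto
    then show ?thesis using good_B[of i J] l wJ J IJ i by auto
  next
    case up
    show ?thesis
    proof (cases "i = s")
      case True
      have "(s, d s) \<in> I" using memI bd sst by auto
      then have "(s-1, d s) \<in> J" using convJ[OF J(1), of w "(s, d s)" "(s-1, d s)"] IJ wJ up True i by auto
      moreover have "(s-1, d s) \<in> grid m n" using calculation Jg by auto
      ultimately show ?thesis using typeD unfolding listed_def by blast
    next
      case False
      then have it: "s < i" using i by auto
      have "d i \<le> d (i-1)" using step1[of "i-1"] it i by auto
      then have lt: "xx < b (i-1)" using uw up memI i it by auto
      have "(i-1, b (i-1)) \<in> I" using memI bd[of "i-1"] it i by auto
      then have "(i-1, b (i-1) - 1) \<in> J" using convJ[OF J(1), of w "(i-1, b (i-1))"] IJ wJ up lt by auto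
      then show ?thesis using good_B[of "i-1" J] J IJ i it by auto
    qed
  qed
qed

lemma listed_notin: "listed v \<Longrightarrow> v \<in> grid m n \<Longrightarrow> v \<notin> I"
  unfolding listed_def grid_def using memI by auto

end
theorem mainTheorem3:
  fixes m n s t :: nat and b d :: "nat \<Rightarrow> nat" and I :: "(nat \<times> nat) set"
  assumes "1 \<le> m" and "1 \<le> n"
    and "I \<in> intervals m n"
    and "staircase m n s t b d I"
  shows "Cov m n I =
    {J. \<exists>v \<in> grid m n. J = I \<union> {v} \<and>
          ((\<exists>j. s \<le> j \<and> j \<le> t \<and> v = (j, b j - 1)) \<or>
           (\<exists>j. s \<le> j \<and> j \<le> t \<and> v = (j, d j + 1)) \<or>
           v = (t + 1, b t) \<or>
           v = (s - 1, d s))} \<inter> intervals m n"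
proof -
  interpret stair m n s t b d I using assms by unfold_locales (auto simp: intervals_def)
  have eq: "{J. \<exists>v \<in> grid m n. J = I \<union> {v} \<and>
          ((\<exists>j. s \<le> j \<and> j \<le> t \<and> v = (j, b j - 1)) \<or>
           (\<exists>j. s \<le> j \<and> j \<le> t \<and> v = (j, d j + 1)) \<or>
           v = (t + 1, b t) \<or>
           v = (s - 1, d s))} = {J. \<exists>v \<in> grid m n. J = I \<union> {v} \<and> listed v}"
    unfolding listed_def by blast
  show ?thesis unfolding eq
  proof (intro equalityI subsetI)
    fix J assume "J \<in> Cov m n I"
    then have J: "is_interval m n J" "I \<subset> J" and no: "\<not> (\<exists>K \<in> intervals m n. I \<subset> K \<and> K \<subset> J)"
      unfolding Cov_def intervals_def by auto
    obtain v where v: "v \<in> J" "v \<in> grid m n" "listed v" "is_interval m n (I \<union> {v})"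
      using exists_v[OF J] by blast
    have "v \<notin> I" using listed_notin v(2,3) by blast
    then have "I \<subset> I \<union> {v}" by auto
    moreover have "I \<union> {v} \<subseteq> J" using J v by auto
    ultimately have "J = I \<union> {v}" using no v(4) unfolding intervals_def by auto
    then show "J \<in> {J. \<exists>v \<in> grid m n. J = I \<union> {v} \<and> listed v} \<inter> intervals m n"
      using v J unfolding intervals_def by auto
  next
    fix J assume "J \<in> {J. \<exists>v \<in> grid m n. J = I \<union> {v} \<and> listed v} \<inter> intervals m n"
    then obtain v where v: "v \<in> grid m n" "J = I \<union> {v}" "listed v" "J \<in> intervals m n" by auto
    have nv: "v \<notin> I" using listed_notin v by auto
    have "\<not> (\<exists>K \<in> intervals m n. I \<subset> K \<and> K \<subset> J)"
    proof
      assume "\<exists>K \<in> intervals m n. I \<subset> K \<and> K \<subset> J"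
      then obtain K where "I \<subset> K" "K \<subset> J" by blast
      then have "v \<in> K" using v(2) by auto
      then show False using \<open>I \<subset> K\<close> \<open>K \<subset> J\<close> v(2) by auto
    qed
    then show "J \<in> Cov m n I" using v nv unfolding Cov_def by auto
  qed
qed

end
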